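(* Let $\mathcal V=\{v^{(1)},\dots,v^{(p)}\}\subset(\mathbb{R}\cup\{-\infty\})^n$, none identically $-\infty$, let $V$ be the matrix with columns $v^{(k)}$, with no row identically $-\infty$, and let $E=\{(i,k):V_{ik}\neq-\infty\}$. Let $$T_i(x)=\inf_{k\in[p],\,(i,k)\in E}\Big[-V_{ik}+\max_{j\in[n],\,j\neq i}(V_{jk}+x_j)\Big],\qquad i\in[n].$$ Let $a\in\mathbb{R}^n$ satisfy $T(a)=-\operatorname{inrad}(\mathcal V)+a$, and let $\sigma:[n]\to[p]$ be a map such that $(i,\sigma(i))\in E$ for all $i\in[n]$. Define $T^\sigma_i(x)=-V_{i\sigma(i)}+\max_{j\in[n],\,j\neq i}(V_{j\sigma(i)}+x_j)$. Then $T(a)=T^\sigma(a)$ if and only if for every $i\in[n]$, the column $V_{\cdot\sigma(i)}$ belongs to the sector $S_i(a)$ and satisfies $\operatorname{dist}_H(V_{\cdot\sigma(i)},\mathcal H_a)=\operatorname{dist}_H(\mathcal V,\mathcal H_a)$.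
   Context: $\mathbb{R}_{\max}=\mathbb{R}\cup\{-\infty\}$, $-\infty+c=-\infty$, $\max\emptyset=-\infty$. $\operatorname{inrad}(\mathcal V)$ is the supremum of radii $r$ of Hilbert balls $B(c,r)=\{x:d(c,x)\le r\}$, $c\in\mathbb{R}^n$, included in the tropical cone generated by $\mathcal V$, where $d(x,y)=\inf\{\lambda-\mu:\lambda,\mu\in\mathbb{R},\ \mu+y_j\le x_j\le\lambda+y_j\ \forall j\}$ is Hilbert's projective metric. $\mathcal H_a=\{y:\max_i(a_i+y_i)\text{ achieved at least twice}\}$; $S_i(a)=\{x: x_i+a_i\ge x_j+a_j\ \forall j\}$; $\operatorname{dist}_H(x,B)=\inf_{y\in B}d(x,y)$, $\operatorname{dist}_H(A,B)=\sup_{x\in A}\operatorname{dist}_H(x,B)$. *)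

theory Defs
  imports "HOL-Analysis.Analysis" "HOL-Library.Extended_Real"
begin

text \<open>R_max = ereal without +infinity. Vectors in R_max^n are functions 'n => ereal
  with no entry equal to PInfty. Matrices V in R_max^{n x p} are 'n => 'p => ereal.\<close>

definition rmax_vecs :: "('n \<Rightarrow> ereal) set" where
  "rmax_vecs = {x. \<forall>j. x j \<noteq> \<infinity>}"

text \<open>Hilbert's projective metric, literally as in the paper (inf over reals lambda, mu;
  Inf of the empty set is +infinity).\<close>
definition hilbert_dist :: "('n \<Rightarrow> ereal) \<Rightarrow> ('n \<Rightarrow> ereal) \<Rightarrow> ereal" where
  "hilbert_dist x y = Inf {ereal (l - m) | l m.
      \<forall>j. ereal m + y j \<le> x j \<and> x j \<le> ereal l + y j}"

definition hilbert_ball :: "('n \<Rightarrow> real) \<Rightarrow> real \<Rightarrow> ('n \<Rightarrow> real) set" where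
  "hilbert_ball c r = {x. hilbert_dist (\<lambda>j. ereal (c j)) (\<lambda>j. ereal (x j)) \<le> ereal r}"

definition trop_cone :: "('n \<Rightarrow> 'p \<Rightarrow> ereal) \<Rightarrow> ('n \<Rightarrow> ereal) set" where
  "trop_cone V = {y. \<exists>lam :: 'p \<Rightarrow> ereal. (\<forall>k. lam k \<noteq> \<infinity>) \<and>
      y = (\<lambda>i. SUP k. lam k + V i k)}"

definition inrad :: "('n \<Rightarrow> 'p \<Rightarrow> ereal) \<Rightarrow> ereal" where
  "inrad V = Sup {ereal r | r. \<exists>c. hilbert_ball c r \<subseteq> {x. (\<lambda>j. ereal (x j)) \<in> trop_cone V}}"

definition columns :: "('n \<Rightarrow> 'p \<Rightarrow> ereal) \<Rightarrow> ('n \<Rightarrow> ereal) set" where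
  "columns V = range (\<lambda>k i. V i k)"

definition trop_hyperplane :: "('n \<Rightarrow> real) \<Rightarrow> ('n \<Rightarrow> ereal) set" where
  "trop_hyperplane a = {y \<in> rmax_vecs. \<exists>i j. i \<noteq> j \<and>
      ereal (a i) + y i = (SUP l. ereal (a l) + y l) \<and>
      ereal (a j) + y j = (SUP l. ereal (a l) + y l)}"

definition sector :: "'n \<Rightarrow> ('n \<Rightarrow> real) \<Rightarrow> ('n \<Rightarrow> ereal) set" where
  "sector i a = {x \<in> rmax_vecs. \<forall>j. x j + ereal (a j) \<le> x i + ereal (a i)}"

definition dist_pt_set :: "('n \<Rightarrow> ereal) \<Rightarrow> ('n \<Rightarrow> ereal) set \<Rightarrow> ereal" where
  "dist_pt_set x B = (INF y\<in>B. hilbert_dist x y)"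

definition dist_set :: "('n \<Rightarrow> ereal) set \<Rightarrow> ('n \<Rightarrow> ereal) set \<Rightarrow> ereal" where
  "dist_set A B = (SUP x\<in>A. dist_pt_set x B)"

text \<open>The operator T (inf over k with (i,k) in E) and T^sigma; max over empty = -infinity.\<close>
definition T_op :: "('n \<Rightarrow> 'p \<Rightarrow> ereal) \<Rightarrow> ('n \<Rightarrow> real) \<Rightarrow> 'n \<Rightarrow> ereal" where
  "T_op V x i = (INF k\<in>{k. V i k \<noteq> -\<infinity>}.
      - V i k + (SUP j\<in>UNIV - {i}. V j k + ereal (x j)))"

definition T_sigma :: "('n \<Rightarrow> 'p \<Rightarrow> ereal) \<Rightarrow> ('n \<Rightarrow> 'p) \<Rightarrow> ('n \<Rightarrow> real) \<Rightarrow> 'n \<Rightarrow> ereal" where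
  "T_sigma V \<sigma> x i = - V i (\<sigma> i) + (SUP j\<in>UNIV - {i}. V j (\<sigma> i) + ereal (x j))"

end

theory Submission
  imports Defs
begin

lemma sup_attain: fixes f :: "'a \<Rightarrow> 'b::complete_linorder"
  assumes "finite A" "A \<noteq> {}" shows "\<exists>x\<in>A. f x = Sup (f`A)"
proof -
  have "Sup (f`A) \<in> f`A"
    using assms by (intro in_chain_finite) (auto simp: chain_def intro: le_cases)
  then show ?thesis by auto
qed

lemma inf_attain: fixes f :: "'a \<Rightarrow> 'b::complete_linorder"
  assumes "finite A" "A \<noteq> {}" shows "\<exists>x\<in>A. f x = Inf (f`A)"
proof -
  have "Inf (f`A) = Min (f`A)" using assms by (simp add: Inf_fin_Inf[symmetric] Inf_fin_Min)
  moreover have "Min (f`A) \<in> f`A" using assms by simp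
  ultimately show ?thesis by auto
qed

lemma distA:
  fixes v :: "'n::finite \<Rightarrow> ereal" and a :: "'n \<Rightarrow> real"
  assumes nv: "\<And>j. v j \<noteq> \<infinity>" and vi: "v i = ereal r"
    and Sle: "(SUP j\<in>UNIV-{i}. v j + ereal (a j)) \<le> ereal (r + a i)"
  shows "dist_pt_set v (trop_hyperplane a) = ereal (r + a i) - (SUP j\<in>UNIV-{i}. v j + ereal (a j))"
proof -
  define S where "S = (SUP j\<in>UNIV-{i}. v j + ereal (a j))"
  have lower: "ereal (r + a i) - S \<le> hilbert_dist v y" if yH: "y \<in> trop_hyperplane a" for y
    unfolding hilbert_dist_def
  proof (rule Inf_greatest, clarify)
    fix l m assume lm: "\<forall>j. ereal m + y j \<le> v j \<and> v j \<le> ereal l + y j"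
    define M where "M = (SUP l. ereal (a l) + y l)"
    from yH obtain p q where pq: "p \<noteq> q" "ereal (a p) + y p = M" "ereal (a q) + y q = M"
      and yr: "\<And>j. y j \<noteq> \<infinity>"
      unfolding trop_hyperplane_def rmax_vecs_def M_def by blast
    obtain p' where p': "p' \<noteq> i" "ereal (a p') + y p' = M"
      using pq by (cases "p = i") (metis, metis)
    have "ereal r \<le> ereal l + y i" using lm vi by metis
    then have "y i \<noteq> -\<infinity>" by auto
    with yr obtain yi where yi: "y i = ereal yi" by (cases "y i") auto
    have "ereal (a i) + y i \<le> M" unfolding M_def by (rule SUP_upper) auto
    then have Mge: "ereal (a i + yi) \<le> M" using yi by simp
    have "y p' \<noteq> -\<infinity>" using p' Mge by auto
    with yr obtain yp where yp: "y p' = ereal yp" by (cases "y p'") auto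
    have Meq: "M = ereal (a p' + yp)" using p' yp by simp
    have "ereal m + y p' \<le> v p'" using lm by blast
    then have "ereal (m + yp + a p') \<le> v p' + ereal (a p')"
      using yp by (cases "v p'") auto
    also have "\<dots> \<le> S" unfolding S_def using p' by (intro SUP_upper) auto
    finally have S1: "ereal (m + yp + a p') \<le> S" .
    with Sle obtain s where s: "S = ereal s" unfolding S_def[symmetric]
      by (cases S) auto
    have r1: "r \<le> l + yi" using \<open>ereal r \<le> ereal l + y i\<close> yi by simp
    have "a i + yi \<le> a p' + yp" using Mge Meq by simp
    then show "ereal (r + a i) - S \<le> ereal (l - m)" using s S1 r1 by simp
  qed
  show ?thesis unfolding S_def[symmetric]
  proof (rule antisym)
    show "ereal (r + a i) - S \<le> dist_pt_set v (trop_hyperplane a)"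
      unfolding dist_pt_set_def by (rule INF_greatest) (rule lower)
  next
    show "dist_pt_set v (trop_hyperplane a) \<le> ereal (r + a i) - S"
    proof (cases S)
      case MInf then show ?thesis by simp
    next
      case PInf then show ?thesis using Sle S_def by simp
    next
      case (real s)
      have ne: "UNIV - {i} \<noteq> {}"
      proof
        assume "UNIV - {i} = {}"
        then have "S = -\<infinity>" unfolding S_def by (simp only: image_empty Sup_empty bot_ereal_def)
        with real show False by simp
      qed
      obtain q where q: "q \<noteq> i" "v q + ereal (a q) = S"
        using sup_attain[OF _ ne, of "\<lambda>j. v j + ereal (a j)"] S_def by auto
      define y where "y = v(i := ereal (s - a i))"
      have sle: "s \<le> r + a i" using Sle real unfolding S_def[symmetric] by simp
      have vle: "v j + ereal (a j) \<le> ereal s" if "j \<noteq> i" for j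
      proof -
        have "v j + ereal (a j) \<le> S" unfolding S_def using that by (intro SUP_upper) auto
        then show ?thesis using real by simp
      qed
      have M: "(SUP l. ereal (a l) + y l) = ereal s"
      proof (rule antisym)
        show "(SUP l. ereal (a l) + y l) \<le> ereal s"
        proof (rule SUP_least)
          fix l show "ereal (a l) + y l \<le> ereal s"
            using vle[of l] by (cases "l = i") (auto simp: y_def add.commute)
        qed
        show "ereal s \<le> (SUP l. ereal (a l) + y l)"
          by (rule SUP_upper2[of i]) (auto simp: y_def)
      qed
      have yr: "y \<in> rmax_vecs" unfolding rmax_vecs_def y_def using nv by auto
      have yi: "ereal (a i) + y i = ereal s" by (simp add: y_def)
      have yq: "ereal (a q) + y q = ereal s" using q(1) q(2) real by (simp add: y_def add.commute)
      have yH: "y \<in> trop_hyperplane a"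
        unfolding trop_hyperplane_def using yr yi yq q(1) M by auto
      have "hilbert_dist v y \<le> ereal ((r + a i - s) - 0)"
        unfolding hilbert_dist_def
      proof (rule Inf_lower, intro CollectI exI conjI allI)
        fix j
        show "ereal 0 + y j \<le> v j" using sle vi by (cases "j = i") (auto simp: y_def)
        have "v j \<le> ereal (r + a i - s) + v j" if "j \<noteq> i"
          using sle nv[of j] by (cases "v j") auto
        then show "v j \<le> ereal (r + a i - s) + y j" using vi
          by (cases "j = i") (auto simp: y_def)
      qed simp
      then have "dist_pt_set v (trop_hyperplane a) \<le> ereal (r + a i - s)"
        unfolding dist_pt_set_def using yH by (metis INF_lower2 diff_zero)
      then show ?thesis using real by simp
    qed
  qed
qed

lemma e1: "S \<noteq> \<infinity> \<Longrightarrow> (S \<le> ereal (r + a)) = (- ereal r + S \<le> ereal a)"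
  by (cases S) auto
lemma e2: "S \<noteq> \<infinity> \<Longrightarrow> ereal (r + a) - S = ereal a - (- ereal r + S)"
  by (cases S) auto
lemma e3: "(T::ereal) \<le> t \<Longrightarrow> ereal a - t \<le> ereal a - T"
  by (cases T; cases t) auto
lemma e4: "ereal a - (- R + ereal a) = R"
  by (cases R) auto
lemma e5: "- R + ereal a \<le> ereal a \<Longrightarrow> R \<ge> 0"
  by (cases R) auto
lemma e6: "t \<noteq> \<infinity> \<Longrightarrow> ereal a - t = R \<Longrightarrow> t = - R + ereal a"
  by (cases t; cases R) auto
lemma e7: "R \<ge> 0 \<Longrightarrow> - R + ereal a \<le> ereal a"
  by (cases R) auto

theorem proposition4p10:
  fixes V :: "'n::finite \<Rightarrow> 'p::finite \<Rightarrow> ereal"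
    and a :: "'n \<Rightarrow> real"
    and \<sigma> :: "'n \<Rightarrow> 'p"
  assumes rmax: "\<And>i k. V i k \<noteq> \<infinity>"
    and cols: "\<And>k. \<exists>i. V i k \<noteq> -\<infinity>"
    and rows: "\<And>i. \<exists>k. V i k \<noteq> -\<infinity>"
    and fixpt: "\<And>i. T_op V a i = - inrad V + ereal (a i)"
    and sigE: "\<And>i. V i (\<sigma> i) \<noteq> -\<infinity>"
  shows "(\<forall>i. T_op V a i = T_sigma V \<sigma> a i) \<longleftrightarrow>
         (\<forall>i. (\<lambda>j. V j (\<sigma> i)) \<in> sector i a \<and>
              dist_pt_set (\<lambda>j. V j (\<sigma> i)) (trop_hyperplane a)
                = dist_set (columns V) (trop_hyperplane a))"
proof -
  define S where "S i k = (SUP j\<in>UNIV-{i}. V j k + ereal (a j))" for i k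
  define t where "t i k = - V i k + S i k" for i k
  define R where "R = inrad V"
  define H where "H = trop_hyperplane a"
  have Tsig: "T_sigma V \<sigma> a i = t i (\<sigma> i)" for i
    by (simp add: T_sigma_def t_def S_def)
  have Top: "T_op V a i = (INF k\<in>{k. V i k \<noteq> -\<infinity>}. t i k)" for i
    by (simp add: T_op_def t_def S_def)
  have fx: "T_op V a i = - R + ereal (a i)" for i using fixpt R_def by simp
  have Sfin: "S i k \<noteq> \<infinity>" for i k
  proof (cases "UNIV - {i} = {}")
    case True then show ?thesis unfolding S_def by (simp only: image_empty Sup_empty bot_ereal_def) simp
  next
    case False
    then obtain j where "V j k + ereal (a j) = S i k"
      using sup_attain[OF _ False, of "\<lambda>j. V j k + ereal (a j)"] unfolding S_def by auto
    then show ?thesis using rmax[of j k] by auto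
  qed
  have fin: "\<exists>r. V i k = ereal r" if "V i k \<noteq> -\<infinity>" for i k
    using that rmax[of i k] by (cases "V i k") auto
  have sec: "(\<lambda>j. V j k) \<in> sector i a \<longleftrightarrow> t i k \<le> ereal (a i)"
    if "V i k = ereal r" for i k r
  proof -
    have "(\<lambda>j. V j k) \<in> sector i a \<longleftrightarrow> (\<forall>j. V j k + ereal (a j) \<le> ereal (r + a i))"
      unfolding sector_def rmax_vecs_def using rmax that by auto
    also have "\<dots> \<longleftrightarrow> S i k \<le> ereal (r + a i)"
      unfolding S_def using that by (auto simp: SUP_le_iff)
    also have "\<dots> \<longleftrightarrow> t i k \<le> ereal (a i)"
      unfolding t_def using e1[OF Sfin] that by simp
    finally show ?thesis .
  qed
  have Dk: "dist_pt_set (\<lambda>j. V j k) H = ereal (a i) - t i k"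
    if "V i k = ereal r" "t i k \<le> ereal (a i)" for i k r
  proof -
    have "S i k \<le> ereal (r + a i)" using that e1[OF Sfin] unfolding t_def by simp
    then have "dist_pt_set (\<lambda>j. V j k) H = ereal (r + a i) - S i k"
      unfolding H_def S_def using distA[of "\<lambda>j. V j k" i r a] rmax that by simp
    then show ?thesis using e2[OF Sfin] that unfolding t_def by simp
  qed
  have argmax: "\<exists>i r. V i k = ereal r \<and> t i k \<le> ereal (a i)" for k
  proof -
    obtain i where i: "V i k + ereal (a i) = (SUP j. V j k + ereal (a j))"
      using sup_attain[of UNIV "\<lambda>j. V j k + ereal (a j)"] by auto
    have le: "V j k + ereal (a j) \<le> V i k + ereal (a i)" for j
      unfolding i by (rule SUP_upper) auto
    obtain i' where "V i' k \<noteq> -\<infinity>" using cols by blast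
    then have "V i k \<noteq> -\<infinity>" using le[of i'] by (cases "V i k"; cases "V i' k") auto
    then obtain r where r: "V i k = ereal r" using fin by blast
    have "(\<lambda>j. V j k) \<in> sector i a" unfolding sector_def rmax_vecs_def using rmax le
      by auto
    then show ?thesis using sec[OF r] r by blast
  qed
  have Tle: "T_op V a i \<le> t i k" if "V i k \<noteq> -\<infinity>" for i k
    unfolding Top by (rule INF_lower) (use that in auto)
  have Tatt: "\<exists>k. V i k \<noteq> -\<infinity> \<and> T_op V a i = t i k" for i
  proof -
    have ne: "{k. V i k \<noteq> -\<infinity>} \<noteq> {}" using rows[of i] by auto
    show ?thesis using inf_attain[OF _ ne, of "t i"] unfolding Top by auto
  qed
  have R0: "R \<ge> 0"
  proof -
    obtain k0 :: 'p where True by blast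
    obtain i r where ir: "V i k0 = ereal r" "t i k0 \<le> ereal (a i)" using argmax by blast
    have "- R + ereal (a i) \<le> ereal (a i)" using Tle[of i k0] ir fx[of i] by simp
    then show ?thesis by (rule e5)
  qed
  have tfin: "t i k \<noteq> \<infinity>" if "V i k \<noteq> -\<infinity>" for i k
    using fin[OF that] Sfin[of i k] unfolding t_def by (cases "S i k") auto
  have DS: "dist_set (columns V) H = R"
  proof (rule antisym)
    show "dist_set (columns V) H \<le> R"
      unfolding dist_set_def columns_def
    proof (rule SUP_least, clarify)
      fix k
      obtain i r where ir: "V i k = ereal r" "t i k \<le> ereal (a i)" using argmax by blast
      have "dist_pt_set (\<lambda>j. V j k) H = ereal (a i) - t i k" using Dk ir by blast
      also have "\<dots> \<le> ereal (a i) - T_op V a i" using Tle[of i k] ir by (intro e3) simp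
      also have "\<dots> = R" using fx[of i] e4 by simp
      finally show "dist_pt_set (\<lambda>j. V j k) H \<le> R" .
    qed
  next
    obtain i0 :: 'n where True by blast
    obtain k where k: "V i0 k \<noteq> -\<infinity>" "T_op V a i0 = t i0 k" using Tatt by blast
    obtain r where r: "V i0 k = ereal r" using fin k by blast
    have tk: "t i0 k = - R + ereal (a i0)" using k fx by simp
    have "dist_pt_set (\<lambda>j. V j k) H = R"
      using Dk[OF r] tk e7[OF R0] e4 by simp
    moreover have "dist_pt_set (\<lambda>j. V j k) H \<le> dist_set (columns V) H"
      unfolding dist_set_def columns_def by (rule SUP_upper) auto
    ultimately show "R \<le> dist_set (columns V) H" by simp
  qed
  have each: "T_op V a i = T_sigma V \<sigma> a i \<longleftrightarrow>
      ((\<lambda>j. V j (\<sigma> i)) \<in> sector i a \<and> dist_pt_set (\<lambda>j. V j (\<sigma> i)) H = R)" for i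
  proof -
    obtain r where r: "V i (\<sigma> i) = ereal r" using fin sigE by blast
    show ?thesis
    proof
      assume "T_op V a i = T_sigma V \<sigma> a i"
      then have tt: "t i (\<sigma> i) = - R + ereal (a i)" using fx Tsig by simp
      then have "t i (\<sigma> i) \<le> ereal (a i)" using e7[OF R0] by simp
      then show "(\<lambda>j. V j (\<sigma> i)) \<in> sector i a \<and> dist_pt_set (\<lambda>j. V j (\<sigma> i)) H = R"
        using sec[OF r] Dk[OF r] tt e4 by simp
    next
      assume "(\<lambda>j. V j (\<sigma> i)) \<in> sector i a \<and> dist_pt_set (\<lambda>j. V j (\<sigma> i)) H = R"
      then have "t i (\<sigma> i) \<le> ereal (a i)" "dist_pt_set (\<lambda>j. V j (\<sigma> i)) H = R"
        using sec[OF r] by auto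
      then have "ereal (a i) - t i (\<sigma> i) = R" using Dk[OF r] by simp
      then have "t i (\<sigma> i) = - R + ereal (a i)" using e6 tfin sigE by blast
      then show "T_op V a i = T_sigma V \<sigma> a i" using fx Tsig by simp
    qed
  qed
  show ?thesis using each DS unfolding H_def by simp
qed

end
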